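(* Let $w = e^{i\varphi}$ with $0 < \varphi < \pi$, and put $\sqrt{w} = e^{i\varphi/2}$. Let $n$ and $r$ be positive integers and \[ R_{n,r}(x) = \frac{\Gamma(r+1+1/n)}{r!\,\Gamma(1/n)} \int_{1}^{x} (1-t)^{r}(t-x)^{r} t^{-(r+1-1/n)}\, dt, \] where the integration path is the straight line from $1$ to $x$. Then \[ \left|R_{n,r}(w)\right| \leq \frac{\Gamma(r+1+1/n)}{r!\,\Gamma(1/n)}\, \varphi\, \left|1-\sqrt{w}\right|^{2r}. \]
   Context: The power $t^{-(r+1-1/n)}$ is taken with the principal branch. *)

theory Defs
  imports "HOL-Complex_Analysis.Complex_Analysis"
begin

definition Rconst :: "nat \<Rightarrow> nat \<Rightarrow> real" where
  "Rconst n r = Gamma (real r + 1 + 1 / real n) / (fact r * Gamma (1 / real n))"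

text \<open>R_{n,r}(x): contour integral along the straight line from 1 to x;
  complex powr is the principal branch.\<close>
definition R_nr :: "nat \<Rightarrow> nat \<Rightarrow> complex \<Rightarrow> complex" where
  "R_nr n r x = complex_of_real (Rconst n r) *
     contour_integral (linepath 1 x)
       (\<lambda>t. (1 - t) ^ r * (t - x) ^ r * t powr (- complex_of_real (real r + 1 - 1 / real n)))"

end

theory Submission
  imports Defs
begin

lemma norm_1_cis: "cmod (1 - cis x) = 2 * \<bar>sin (x/2)\<bar>"
proof -
  have "(cmod (1 - cis x))^2 = (1 - cos x)^2 + (sin x)^2"
    by (simp add: cmod_power2)
  also have "\<dots> = 2 - 2 * cos x" using sin_cos_squared_add[of x]
    by (simp add: power2_eq_square algebra_simps)
  also have "\<dots> = (2 * \<bar>sin (x/2)\<bar>)^2"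
    using cos_double_sin[of "x/2"] by (simp add: power2_eq_square)
  finally show ?thesis
    by (metis abs_of_nonneg norm_ge_zero power2_eq_iff_nonneg zero_le_mult_iff abs_ge_zero zero_le_numeral)
qed

lemma arc_bound:
  assumes "0 \<le> \<theta>" "\<theta> \<le> \<phi>" "\<phi> < pi"
  shows "cmod (1 - cis \<theta>) * cmod (cis \<theta> - cis \<phi>) \<le> (cmod (1 - cis (\<phi>/2)))^2"
proof -
  have e: "cis \<theta> - cis \<phi> = cis \<theta> * (1 - cis (\<phi> - \<theta>))"
    by (simp add: algebra_simps cis_mult)
  have n2: "cmod (cis \<theta> - cis \<phi>) = 2 * \<bar>sin ((\<phi> - \<theta>)/2)\<bar>"
    unfolding e norm_mult by (simp add: norm_1_cis)
  have s1: "sin (\<theta>/2) \<ge> 0" using assms by (intro sin_ge_zero) auto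
  have s2: "sin ((\<phi>-\<theta>)/2) \<ge> 0" using assms by (intro sin_ge_zero) auto
  have s3: "sin (\<phi>/4) \<ge> 0" using assms by (intro sin_ge_zero) auto
  have "cmod (1 - cis \<theta>) * cmod (cis \<theta> - cis \<phi>) = 4 * (sin (\<theta>/2) * sin ((\<phi>-\<theta>)/2))"
    using s1 s2 by (simp add: norm_1_cis n2)
  also have "\<dots> = 2 * (cos (\<theta>/2 - (\<phi>-\<theta>)/2) - cos (\<theta>/2 + (\<phi>-\<theta>)/2))"
    by (simp add: sin_times_sin)
  also have "\<dots> \<le> 2 * (1 - cos (\<phi>/2))"
    using cos_le_one[of "\<theta>/2 - (\<phi>-\<theta>)/2"] by (simp add: field_simps)
  also have "\<dots> = (2 * sin (\<phi>/4))^2"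
    using cos_double_sin[of "\<phi>/4"] by (simp add: power2_eq_square)
  also have "\<dots> = (cmod (1 - cis (\<phi>/2)))^2"
    using s3 by (simp add: norm_1_cis)
  finally show ?thesis .
qed

theorem lemma2p5:
  fixes \<phi> :: real and n r :: nat and w sqw :: complex
  assumes "0 < \<phi>" and "\<phi> < pi" and "0 < n" and "0 < r"
    and "w = exp (\<i> * complex_of_real \<phi>)"
    and "sqw = exp (\<i> * complex_of_real (\<phi> / 2))"
  shows "norm (R_nr n r w) \<le> Rconst n r * \<phi> * norm (1 - sqw) ^ (2 * r)"
proof -
  have w: "w = cis \<phi>" and sqw: "sqw = cis (\<phi>/2)" using assms(5,6) by (simp_all add: cis_conv_exp)
  define c where "c = complex_of_real (real r + 1 - 1 / real n)"
  define f where "f = (\<lambda>t::complex. (1 - t) ^ r * (t - w) ^ r * t powr (- c))"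
  define a where "a = Complex (cos (\<phi>/2)) (sin (\<phi>/2))"
  define S where "S = {t. inner a t > 0}"
  have cpos: "cos (\<phi>/2) > 0" using assms by (intro cos_gt_zero_pi) auto
  have convS: "convex S" unfolding S_def by (rule convex_halfspace_gt)
  have openS: "open S" unfolding S_def by (rule open_halfspace_gt)
  have inS: "cis \<theta> \<in> S" if "0 \<le> \<theta>" "\<theta> \<le> \<phi>" for \<theta>
  proof -
    have "inner a (cis \<theta>) = cos (\<theta> - \<phi>/2)"
      by (simp add: a_def inner_complex_def cos_diff algebra_simps)
    moreover have "cos (\<theta> - \<phi>/2) > 0" using that assms by (intro cos_gt_zero_pi) auto
    ultimately show ?thesis by (simp add: S_def)
  qed
  have holf: "f holomorphic_on S"
    unfolding f_def
  proof (intro holomorphic_intros)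
    fix x assume "x \<in> S"
    then have "inner a x > 0" by (simp add: S_def)
    show "x \<notin> \<real>\<^sub>\<le>\<^sub>0"
    proof
      assume "x \<in> \<real>\<^sub>\<le>\<^sub>0"
      then have "Im x = 0" "Re x \<le> 0" by (auto simp: complex_nonpos_Reals_iff)
      then have "inner a x \<le> 0" using cpos
        by (simp add: a_def inner_complex_def mult_nonneg_nonpos less_imp_le)
      with \<open>inner a x > 0\<close> show False by simp
    qed
  qed
  define arc where "arc = part_circlepath 0 1 0 \<phi>"
  have arc_img: "path_image arc = cis ` {0..\<phi>}"
    using assms(1) by (simp add: arc_def path_image_part_circlepath' closed_segment_eq_real_ivl)
  have arcS: "path_image arc \<subseteq> S" unfolding arc_img using inS by auto
  have "1 \<in> S" using inS[of 0] assms by simp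
  moreover have "w \<in> S" using inS[of \<phi>] assms w by simp
  ultimately have segS: "path_image (linepath 1 w) \<subseteq> S"
    using convS by (simp add: closed_segment_subset)
  have arc_start: "pathstart arc = 1" and arc_finish: "pathfinish arc = w"
    by (simp_all add: arc_def w cis_conv_exp)
  have va: "valid_path arc" by (simp add: arc_def)
  have i1: "f contour_integrable_on linepath 1 w"
    by (rule contour_integrable_holomorphic_simple[OF holf openS]) (use segS in auto)
  have i2: "f contour_integrable_on arc"
    by (rule contour_integrable_holomorphic_simple[OF holf openS va arcS])
  have "(f has_contour_integral 0) (linepath 1 w +++ reversepath arc)"
    by (rule Cauchy_theorem_convex_simple[OF holf convS])
       (use va segS arcS arc_start arc_finish in \<open>auto simp: path_image_join valid_path_join\<close>)
  then have "contour_integral (linepath 1 w +++ reversepath arc) f = 0"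
    by (rule contour_integral_unique)
  moreover have "contour_integral (linepath 1 w +++ reversepath arc) f
      = contour_integral (linepath 1 w) f - contour_integral arc f"
    using i1 i2 va arc_start arc_finish
    by (simp add: contour_integral_join contour_integrable_reversepath contour_integral_reversepath)
  ultimately have eq: "contour_integral (linepath 1 w) f = contour_integral arc f" by simp
  have B: "norm (f x) \<le> norm (1 - sqw) ^ (2 * r)" if xin: "x \<in> path_image arc" for x
  proof -
    obtain \<theta> where th: "0 \<le> \<theta>" "\<theta> \<le> \<phi>" "x = cis \<theta>" using xin arc_img by auto
    have "norm (x powr (- c)) = 1"
      using th by (simp add: norm_powr_real_powr' c_def)
    then have "norm (f x) = (cmod (1 - cis \<theta>) * cmod (cis \<theta> - cis \<phi>)) ^ r"
      by (simp add: f_def norm_mult norm_power th w power_mult_distrib)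
    also have "\<dots> \<le> ((cmod (1 - cis (\<phi>/2)))^2) ^ r"
      using arc_bound[OF th(1,2) assms(2)] by (intro power_mono) auto
    finally show ?thesis by (simp add: sqw power_mult)
  qed
  have bound: "norm (contour_integral arc f) \<le> norm (1 - sqw) ^ (2 * r) * 1 * (\<phi> - 0)"
    by (rule has_contour_integral_bound_part_circlepath[where z=0 and r=1 and s=0 and t=\<phi>])
       (use i2 B assms in \<open>auto simp: arc_def has_contour_integral_integral\<close>)
  have Rc: "Rconst n r \<ge> 0"
    unfolding Rconst_def using assms(3)
    by (intro divide_nonneg_pos mult_pos_pos Gamma_real_pos less_imp_le) (auto intro: add_pos_nonneg)
  have "R_nr n r w = complex_of_real (Rconst n r) * contour_integral arc f"
    unfolding R_nr_def eq[symmetric] by (simp add: f_def c_def)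
  then have "norm (R_nr n r w) = Rconst n r * norm (contour_integral arc f)"
    using Rc by (simp add: norm_mult)
  also have "\<dots> \<le> Rconst n r * (norm (1 - sqw) ^ (2 * r) * \<phi>)"
    using bound Rc by (intro mult_left_mono) auto
  finally show ?thesis by (simp add: algebra_simps)
qed

end
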